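(* For any two different words $x,y$ over a finite alphabet $\Sigma$, there is a 2-state MCQFA (with complex amplitudes) that separates $x$ and $y$ in nondeterministic mode.
   Context: A 2-state Moore–Crutchfield quantum finite automaton (MCQFA) over $\Sigma$ consists of a unitary $U_\sigma\in\mathbb{C}^{2\times 2}$ for each $\sigma\in\Sigma$, an initial unit vector $|u_0\rangle\in\mathbb{C}^2$ and a set of accepting basis states; on input $w=w_1\cdots w_k$ the final state is $U_{w_k}\cdots U_{w_1}|u_0\rangle$ and the acceptance probability is the sum of the squared moduli of its accepting coordinates. The automaton separates $x$ and $y$ in nondeterministic mode if one of them is accepted with nonzero probability and the other with probability $0$. *)

theory Defs
  imports "HOL-Analysis.Analysis"
begin

definition cadj :: "complex^'n^'m \<Rightarrow> complex^'m^'n" where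
  "cadj A = (\<chi> i j. cnj (A $ j $ i))"

definition unitary_mat :: "complex^'n^'n \<Rightarrow> bool" where
  "unitary_mat U \<longleftrightarrow> cadj U ** U = mat 1 \<and> U ** cadj U = mat 1"

record 's mcqfa2 =
  trans :: "'s \<Rightarrow> complex^2^2"
  init :: "complex^2"
  accepting :: "2 set"

definition is_mcqfa2 :: "'s mcqfa2 \<Rightarrow> bool" where
  "is_mcqfa2 M \<longleftrightarrow> (\<forall>\<sigma>. unitary_mat (trans M \<sigma>)) \<and> norm (init M) = 1"

text \<open>Final state U_{w_k} ... U_{w_1} u0: letters applied left to right.\<close>
definition final_state :: "'s mcqfa2 \<Rightarrow> 's list \<Rightarrow> complex^2" where
  "final_state M w = fold (\<lambda>\<sigma> v. trans M \<sigma> *v v) w (init M)"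

definition acc_prob :: "'s mcqfa2 \<Rightarrow> 's list \<Rightarrow> real" where
  "acc_prob M w = (\<Sum>q\<in>accepting M. (cmod (final_state M w $ q))\<^sup>2)"

definition separates_nondet :: "'s mcqfa2 \<Rightarrow> 's list \<Rightarrow> 's list \<Rightarrow> bool" where
  "separates_nondet M x y \<longleftrightarrow>
     (acc_prob M x > 0 \<and> acc_prob M y = 0) \<or> (acc_prob M y > 0 \<and> acc_prob M x = 0)"

end

theory Submission imports Defs begin

definition gi :: "complex \<Rightarrow> bool" where "gi z \<longleftrightarrow> Re z \<in> \<int> \<and> Im z \<in> \<int>"
definition gv :: "complex^2 \<Rightarrow> bool" where "gv v \<longleftrightarrow> (\<forall>i. gi (v$i))"
definition gm :: "complex^2^2 \<Rightarrow> bool" where "gm M \<longleftrightarrow> (\<forall>i j. gi (M$i$j))"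
definition unit3 :: "complex \<Rightarrow> bool" where
  "unit3 \<mu> \<longleftrightarrow> gi \<mu> \<and> (\<exists>\<mu>'. gi \<mu>' \<and> gi ((\<mu>*\<mu>' - 1)/3))"
definition dot2 :: "complex^2 \<Rightarrow> complex^2 \<Rightarrow> complex" where
  "dot2 r c = r$1*c$1 + r$2*c$2"

lemma gi_add[intro]: "gi a \<Longrightarrow> gi b \<Longrightarrow> gi (a+b)" by (auto simp: gi_def)
lemma gi_diff[intro]: "gi a \<Longrightarrow> gi b \<Longrightarrow> gi (a-b)" by (auto simp: gi_def)
lemma gi_mult[intro]: "gi a \<Longrightarrow> gi b \<Longrightarrow> gi (a*b)" by (auto simp: gi_def)
lemma gi_cnj[intro]: "gi a \<Longrightarrow> gi (cnj a)" by (auto simp: gi_def)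
lemma gi_3[intro]: "gi 3" by (simp add: gi_def)

lemma nz3_mult:
  assumes "gi l" "\<not> gi (l/3)" "unit3 m" shows "\<not> gi (l*m/3)"
proof
  assume h: "gi (l*m/3)"
  from assms(3) obtain m' where m': "gi m'" "gi ((m*m' - 1)/3)" unfolding unit3_def by blast
  have "l/3 = (l*m/3)*m' - l*((m*m' - 1)/3)" by (simp add: field_simps)
  also have "gi \<dots>" using h m' assms(1) by blast
  finally show False using assms(2) by simp
qed

lemma "unit3 (1 - 2*\<i>)" unfolding unit3_def
  apply (rule conjI) apply (simp add: gi_def)
  apply (rule exI[of _ "-1+\<i>"]) by (simp add: gi_def)

definition R1 :: "complex^2^2 \<Rightarrow> complex^2 \<Rightarrow> complex^2 \<Rightarrow> bool" where
  "R1 N c r \<longleftrightarrow> gv c \<and> gv r \<and> (\<exists>l E. gi l \<and> \<not> gi (l/3) \<and> gm E \<and>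
      N = (\<chi> i j. l * c$i * r$j + 3 * E$i$j))"
definition decomp :: "complex^2^2 \<Rightarrow> complex^2 \<Rightarrow> complex^2 \<Rightarrow> bool" where
  "decomp M c r \<longleftrightarrow> gv c \<and> gv r \<and> (\<exists>F. gm F \<and> M = (\<chi> i j. c$i * r$j + 3 * F$i$j))"

lemma decomp_R1: "decomp M c r \<Longrightarrow> R1 M c r"
  unfolding decomp_def R1_def
  by (rule conjI, simp, rule conjI, simp, (erule conjE)+, erule exE,
      rule_tac x=1 in exI, auto simp: gi_def)

lemma R1_left:
  assumes "R1 N c r" "decomp M c' r'" "unit3 (dot2 r' c)"
  shows "R1 (M ** N) c' r"
proof -
  from assms(1) obtain l E where N: "gv c" "gv r" "gi l" "\<not> gi (l/3)" "gm E"
    "N = (\<chi> i j. l * c$i * r$j + 3 * E$i$j)" unfolding R1_def by blast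
  from assms(2) obtain F where M: "gv c'" "gv r'" "gm F" "M = (\<chi> i j. c'$i * r'$j + 3 * F$i$j)"
    unfolding decomp_def by blast
  define E' where "E' = (\<chi> i j. c'$i * (r'$1*E$1$j + r'$2*E$2$j) + l*(F$i$1*c$1 + F$i$2*c$2)*r$j
       + 3*(F$i$1*E$1$j + F$i$2*E$2$j))"
  have "gm E'" unfolding E'_def gm_def vec_lambda_beta
    using N M unfolding gv_def gm_def by (intro allI gi_add gi_mult gi_3) auto
  moreover have "\<not> gi (l * dot2 r' c / 3)" using nz3_mult[OF N(3,4) assms(3)] .
  moreover have "gi (l * dot2 r' c)" using N M assms(3) unfolding unit3_def by blast
  moreover have "M ** N = (\<chi> i j. (l * dot2 r' c) * c'$i * r$j + 3 * E'$i$j)"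
    unfolding N(6) M(4) E'_def dot2_def
    by (simp add: vec_eq_iff matrix_matrix_mult_def sum_2 algebra_simps)
  ultimately show ?thesis unfolding R1_def using N M by blast
qed

lemma R1_right:
  assumes "R1 N c r" "decomp M c' r'" "unit3 (dot2 r c')"
  shows "R1 (N ** M) c r'"
proof -
  from assms(1) obtain l E where N: "gv c" "gv r" "gi l" "\<not> gi (l/3)" "gm E"
    "N = (\<chi> i j. l * c$i * r$j + 3 * E$i$j)" unfolding R1_def by blast
  from assms(2) obtain F where M: "gv c'" "gv r'" "gm F" "M = (\<chi> i j. c'$i * r'$j + 3 * F$i$j)"
    unfolding decomp_def by blast
  define E' where "E' = (\<chi> i j. l * c$i * (r$1*F$1$j + r$2*F$2$j) + (E$i$1*c'$1 + E$i$2*c'$2)*r'$j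
       + 3*(E$i$1*F$1$j + E$i$2*F$2$j))"
  have "gm E'" unfolding E'_def gm_def vec_lambda_beta
    using N M unfolding gv_def gm_def by (intro allI gi_add gi_mult gi_3) auto
  moreover have "\<not> gi (l * dot2 r c' / 3)" using nz3_mult[OF N(3,4) assms(3)] .
  moreover have "gi (l * dot2 r c')" using N M assms(3) unfolding unit3_def by blast
  moreover have "N ** M = (\<chi> i j. (l * dot2 r c') * c$i * r'$j + 3 * E'$i$j)"
    unfolding N(6) M(4) E'_def dot2_def
    by (simp add: vec_eq_iff matrix_matrix_mult_def sum_2 algebra_simps)
  ultimately show ?thesis unfolding R1_def using N M by blast
qed

lemma R1_entry:
  assumes "R1 N c r" "unit3 (c$1 * r$2)" shows "N$1$2 \<noteq> 0"
proof
  assume h: "N$1$2 = 0"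
  from assms(1) obtain l E where N: "gv c" "gv r" "gi l" "\<not> gi (l/3)" "gm E"
    "N = (\<chi> i j. l * c$i * r$j + 3 * E$i$j)" unfolding R1_def by blast
  have h2: "l * (c$1 * r$2) + 3 * E$1$2 = 0" using h N(6) by (simp add: mult.assoc)
  have "l * (c$1 * r$2) / 3 = - E$1$2" using h2 by (simp add: field_simps eq_neg_iff_add_eq_0)
  moreover have "gi (- E$1$2)" using N(5) unfolding gm_def gi_def by auto
  ultimately show False using nz3_mult[OF N(3,4) assms(2)] by simp
qed

definition mat2 :: "complex \<Rightarrow> complex \<Rightarrow> complex \<Rightarrow> complex \<Rightarrow> complex^2^2" where
  "mat2 a b c d = (\<chi> i j. if i = 1 then (if j = 1 then a else b) else (if j = 1 then c else d))"
definition vec2 :: "complex \<Rightarrow> complex \<Rightarrow> complex^2" where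
  "vec2 a b = (\<chi> i. if i = 1 then a else b)"
definition cnjv :: "complex^2 \<Rightarrow> complex^2" where "cnjv v = (\<chi> i. cnj (v$i))"

lemma two_ne_one[simp]: "(2::2) \<noteq> 1" by simp

lemma vec2_nth[simp]: "vec2 a b $ 1 = a" "vec2 a b $ 2 = b" by (simp_all add: vec2_def)
lemma mat2_nth[simp]: "mat2 a b c d $ 1 $ 1 = a" "mat2 a b c d $ 1 $ 2 = b"
  "mat2 a b c d $ 2 $ 1 = c" "mat2 a b c d $ 2 $ 2 = d" by (simp_all add: mat2_def)
lemma cnjv_vec2[simp]: "cnjv (vec2 a b) = vec2 (cnj a) (cnj b)"
  by (simp add: cnjv_def vec_eq_iff forall_2)
lemma dot2_vec2[simp]: "dot2 (vec2 a b) (vec2 c d) = a*c + b*d" by (simp add: dot2_def)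

lemma decomp_cadj: assumes "decomp M c r" shows "decomp (cadj M) (cnjv r) (cnjv c)"
proof -
  from assms obtain F where M: "gv c" "gv r" "gm F" "M = (\<chi> i j. c$i * r$j + 3 * F$i$j)"
    unfolding decomp_def by blast
  have "gm (\<chi> i j. cnj (F$j$i))" using M(3) unfolding gm_def by auto
  moreover have "cadj M = (\<chi> i j. cnjv r$i * cnjv c$j + 3 * (\<chi> i j. cnj (F$j$i))$i$j)"
    unfolding M(4) cadj_def cnjv_def by (simp add: vec_eq_iff)
  moreover have "gv (cnjv r)" "gv (cnjv c)" using M(1,2) unfolding gv_def cnjv_def by auto
  ultimately show ?thesis unfolding decomp_def by blast
qed

definition HA :: "complex^2^2" where "HA = mat2 (1+\<i>) 1 (-1) (1-\<i>)"
definition HB :: "complex^2^2" where "HB = mat2 (1-\<i>) 1 (-1) (1+\<i>)"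
definition cA :: "complex^2" where "cA = vec2 1 (1-\<i>)"
definition rA :: "complex^2" where "rA = vec2 (1+\<i>) 1"
definition cB :: "complex^2" where "cB = vec2 1 (1+\<i>)"
definition rB :: "complex^2" where "rB = vec2 (1-\<i>) 1"

lemma gv_vec2: "gi a \<Longrightarrow> gi b \<Longrightarrow> gv (vec2 a b)" by (simp add: gv_def forall_2)

lemma decomp_HA: "decomp HA cA rA"
  unfolding decomp_def HA_def cA_def rA_def
  apply (intro conjI gv_vec2) apply (simp_all add: gi_def)
  apply (rule exI[of _ "mat2 0 0 (-1) 0"])
  by (auto simp: gm_def forall_2 gi_def vec_eq_iff complex_eq_iff)

lemma decomp_HB: "decomp HB cB rB"
  unfolding decomp_def HB_def cB_def rB_def
  apply (intro conjI gv_vec2) apply (simp_all add: gi_def)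
  apply (rule exI[of _ "mat2 0 0 (-1) 0"])
  by (auto simp: gm_def forall_2 gi_def vec_eq_iff complex_eq_iff)

lemma unit3I: "gi m \<Longrightarrow> gi m' \<Longrightarrow> gi ((m*m' - 1)/3) \<Longrightarrow> unit3 m"
  unfolding unit3_def by blast

lemma units:
  "unit3 (dot2 rA cA)" "unit3 (dot2 rA cB)" "unit3 (dot2 rB cA)" "unit3 (dot2 rB cB)"
  "unit3 (dot2 rB (cnjv rA))"
  "unit3 (dot2 (cnjv cA) (cnjv rA))" "unit3 (dot2 (cnjv cA) (cnjv rB))"
  "unit3 (dot2 (cnjv cB) (cnjv rA))" "unit3 (dot2 (cnjv cB) (cnjv rB))"
  "unit3 (cA$1 * (cnjv cA)$2)" "unit3 (cA$1 * (cnjv cB)$2)"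
  "unit3 (cB$1 * (cnjv cA)$2)" "unit3 (cB$1 * (cnjv cB)$2)"
  "unit3 (cA$1 * rA$2)" "unit3 (cA$1 * rB$2)" "unit3 (cB$1 * rA$2)" "unit3 (cB$1 * rB$2)"
  unfolding cA_def rA_def cB_def rB_def
  apply (rule unit3I[where m'=2]; simp add: gi_def)
  apply (rule unit3I[where m'="1-\<i>"]; simp add: gi_def)
  apply (rule unit3I[where m'="1+\<i>"]; simp add: gi_def)
  apply (rule unit3I[where m'=2]; simp add: gi_def)
  apply (rule unit3I[where m'="-1+\<i>"]; simp add: gi_def)
  apply (rule unit3I[where m'=2]; simp add: gi_def)
  apply (rule unit3I[where m'="1-\<i>"]; simp add: gi_def)
  apply (rule unit3I[where m'="1+\<i>"]; simp add: gi_def)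
  apply (rule unit3I[where m'=2]; simp add: gi_def)
  apply (rule unit3I[where m'="-1+\<i>"]; simp add: gi_def)
  apply (rule unit3I[where m'="-1-\<i>"]; simp add: gi_def)
  apply (rule unit3I[where m'="-1+\<i>"]; simp add: gi_def)
  apply (rule unit3I[where m'="-1-\<i>"]; simp add: gi_def)
  by (rule unit3I[where m'=1]; simp add: gi_def)+

definition wprod :: "('s \<Rightarrow> complex^2^2) \<Rightarrow> 's list \<Rightarrow> complex^2^2" where
  "wprod T w = fold (\<lambda>\<sigma> N. T \<sigma> ** N) w (mat 1)"

lemma fold_mul: "fold (\<lambda>\<sigma> N. T \<sigma> ** N) w (N::complex^2^2) = wprod T w ** N"
proof (induction w arbitrary: N)
  case Nil then show ?case by (simp add: wprod_def)
next
  case (Cons a w)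
  have "wprod T (a # w) = wprod T w ** T a" using Cons[of "T a ** mat 1"] by (simp add: wprod_def)
  then show ?case using Cons[of "T a ** N"] by (simp add: matrix_mul_assoc)
qed

lemma wprod_Nil[simp]: "wprod T [] = mat 1" by (simp add: wprod_def)
lemma wprod_Cons: "wprod T (a # w) = wprod T w ** T a"
  using fold_mul[of T w "T a ** mat 1"] by (simp add: wprod_def)
lemma wprod_append: "wprod T (xs @ ys) = wprod T ys ** wprod T xs"
  using fold_mul[of T ys "wprod T xs"] by (simp add: wprod_def)

lemma fold_vec: "fold (\<lambda>\<sigma> v. T \<sigma> *v v) w (N *v v0) = fold (\<lambda>\<sigma> N. T \<sigma> ** N) w N *v v0"
  by (induction w arbitrary: N) (simp_all add: matrix_vector_mul_assoc)

lemma final_state_wprod: "final_state M w = wprod (trans M) w *v init M"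
  using fold_vec[of "trans M" w "mat 1" "init M"] by (simp add: final_state_def wprod_def)

lemma cscale: "r *\<^sub>R (z::complex) = of_real r * z" by (simp add: scaleR_conv_of_real)
lemma cadj_mult: "cadj (A ** B) = cadj B ** (cadj (A :: complex^2^2))"
  by (simp add: cadj_def vec_eq_iff matrix_matrix_mult_def sum_2 mult.commute)
lemma cadj_mat1: "cadj (mat 1 :: complex^2^2) = mat 1"
  by (simp add: cadj_def vec_eq_iff mat_def forall_2)
lemma scaleR_mm: "((a::real) *\<^sub>R A) ** ((b::real) *\<^sub>R B) = (a*b) *\<^sub>R (A ** (B::complex^2^2))"
  by (simp add: vec_eq_iff matrix_matrix_mult_def sum_2 algebra_simps cscale)
lemma scaleR_mm1: "((a::real) *\<^sub>R (A::complex^2^2)) ** B = a *\<^sub>R (A ** (B::complex^2^2))"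
  by (simp add: vec_eq_iff matrix_matrix_mult_def sum_2 algebra_simps cscale)
lemma scaleR_mm2: "A ** ((a::real) *\<^sub>R B) = a *\<^sub>R (A ** (B::complex^2^2))"
  by (simp add: vec_eq_iff matrix_matrix_mult_def sum_2 algebra_simps cscale)
lemma cadj_scaleR: "cadj ((a::real) *\<^sub>R (A::complex^2^2)) = a *\<^sub>R cadj A"
  by (simp add: cadj_def vec_eq_iff cscale)

lemma wprod_scale: "wprod (\<lambda>\<sigma>. k *\<^sub>R T \<sigma>) w = (k ^ length w) *\<^sub>R wprod T w"
proof (induction w rule: rev_induct)
  case Nil then show ?case by simp
next
  case (snoc a w)
  then show ?case using wprod_append[of _ w "[a]"]
    by (simp add: wprod_Cons scaleR_mm mult.commute)
qed

lemma unitary_mult: "unitary_mat A \<Longrightarrow> unitary_mat B \<Longrightarrow> unitary_mat (A ** (B::complex^2^2))"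
  unfolding unitary_mat_def cadj_mult
  by (metis matrix_mul_assoc matrix_mul_lid matrix_mul_rid)

lemma unitary_wprod: "(\<And>\<sigma>. unitary_mat (T \<sigma>)) \<Longrightarrow> unitary_mat (wprod T w)"
proof (induction w rule: rev_induct)
  case Nil then show ?case by (simp add: unitary_mat_def cadj_mat1)
next
  case (snoc a w)
  then show ?case using wprod_append[of T w "[a]"] unitary_mult
    by (simp add: wprod_Cons)
qed

lemma HA_unit: "cadj HA ** HA = mat 3" "HA ** cadj HA = mat 3"
  by (simp_all add: HA_def cadj_def vec_eq_iff forall_2 matrix_matrix_mult_def sum_2 mat_def complex_eq_iff)
lemma HB_unit: "cadj HB ** HB = mat 3" "HB ** cadj HB = mat 3"
  by (simp_all add: HB_def cadj_def vec_eq_iff forall_2 matrix_matrix_mult_def sum_2 mat_def complex_eq_iff)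

lemma scaled_unitary:
  assumes "cadj H ** H = mat 3" "H ** cadj H = mat 3"
  shows "unitary_mat ((1/sqrt 3) *\<^sub>R (H::complex^2^2))"
proof -
  have e: "(1/sqrt 3 * (1/sqrt 3)) *\<^sub>R (mat 3 :: complex^2^2) = mat 1"
    by (simp add: vec_eq_iff mat_def cscale)
  show ?thesis unfolding unitary_mat_def cadj_scaleR scaleR_mm assms e by simp
qed

definition hh :: "'s \<Rightarrow> 's \<Rightarrow> complex^2^2" where
  "hh a0 \<sigma> = (if \<sigma> = a0 then HA else HB)"

lemma hh_unitary: "unitary_mat ((1/sqrt 3) *\<^sub>R hh a0 \<sigma>)"
  unfolding hh_def using scaled_unitary HA_unit HB_unit by auto

lemma left_ind:
  assumes "R1 N c r" "c \<in> {cA, cB}"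
  shows "\<exists>c'\<in>{cA,cB}. R1 (wprod (hh a0) v ** N) c' r"
  using assms
proof (induction v arbitrary: N c)
  case Nil then show ?case by auto
next
  case (Cons a v)
  have "\<exists>c'\<in>{cA,cB}. R1 (hh a0 a ** N) c' r"
  proof (cases "a = a0")
    case True
    then show ?thesis using R1_left[OF Cons.prems(1) decomp_HA] Cons.prems(2) units
      by (auto simp: hh_def)
  next
    case False
    then show ?thesis using R1_left[OF Cons.prems(1) decomp_HB] Cons.prems(2) units
      by (auto simp: hh_def)
  qed
  then obtain c' where "c' \<in> {cA,cB}" "R1 (hh a0 a ** N) c' r" by blast
  from Cons.IH[OF this(2,1)] show ?case by (simp add: wprod_Cons matrix_mul_assoc)
qed

lemma right_ind:
  assumes "R1 N c r" "r \<in> {cnjv cA, cnjv cB}"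
  shows "\<exists>r'\<in>{cnjv cA, cnjv cB}. R1 (N ** cadj (wprod (hh a0) u)) c r'"
  using assms
proof (induction u arbitrary: N r)
  case Nil then show ?case by (auto simp: cadj_mat1)
next
  case (Cons a u)
  have "\<exists>r'\<in>{cnjv cA, cnjv cB}. R1 (N ** cadj (hh a0 a)) c r'"
  proof (cases "a = a0")
    case True
    then show ?thesis using R1_right[OF Cons.prems(1) decomp_cadj[OF decomp_HA]] Cons.prems(2) units
      by (auto simp: hh_def)
  next
    case False
    then show ?thesis using R1_right[OF Cons.prems(1) decomp_cadj[OF decomp_HB]] Cons.prems(2) units
      by (auto simp: hh_def)
  qed
  then obtain r' where "r' \<in> {cnjv cA, cnjv cB}" "R1 (N ** cadj (hh a0 a)) c r'" by blast
  from Cons.IH[OF this(2,1)] show ?case by (simp add: wprod_Cons cadj_mult matrix_mul_assoc)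
qed

lemma key_sep:
  fixes T :: "'s \<Rightarrow> complex^2^2"
  assumes U: "\<And>\<sigma>. unitary_mat (T \<sigma>)"
  and nz: "(wprod T y ** cadj (wprod T x))$1$2 \<noteq> 0"
  shows "\<exists>M :: 's mcqfa2. is_mcqfa2 M \<and> separates_nondet M x y"
proof -
  define P where "P = wprod T x"
  define Q where "Q = wprod T y"
  define e :: "complex^2" where "e = axis 2 1"
  define M :: "'s mcqfa2" where "M = \<lparr>trans = T, init = cadj P *v e, accepting = {1}\<rparr>"
  have uP: "P ** cadj P = mat 1" using unitary_wprod[of T x] U unfolding P_def unitary_mat_def by blast
  have iv: "init M $ i = cnj (P$2$i)" for i
    by (simp add: M_def e_def cadj_def matrix_vector_mult_def sum_2 axis_def)
  have "(\<Sum>k\<in>UNIV. P$2$k * cnj (P$2$k)) = 1" using uP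
    by (simp add: vec_eq_iff matrix_matrix_mult_def cadj_def mat_def)
  hence "complex_of_real ((cmod (P$2$1))\<^sup>2 + (cmod (P$2$2))\<^sup>2) = 1"
    apply (simp add: sum_2 complex_norm_square[symmetric] del: of_real_add of_real_power)
    by (metis of_real_add of_real_eq_1_iff)
  hence s1: "(cmod (P$2$1))\<^sup>2 + (cmod (P$2$2))\<^sup>2 = 1" using of_real_eq_1_iff by blast
  have "norm (init M) = 1"
    unfolding norm_vec_def L2_set_def using s1 by (simp add: sum_2 iv)
  hence isM: "is_mcqfa2 M" unfolding is_mcqfa2_def M_def using U by simp
  have fx: "final_state M x = e"
    by (simp add: final_state_wprod M_def matrix_vector_mul_assoc P_def[symmetric] uP)
  have fy: "final_state M y = (Q ** cadj P) *v e"
    by (simp add: final_state_wprod M_def matrix_vector_mul_assoc P_def[symmetric] Q_def[symmetric])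
  have acc: "accepting M = {1}" by (simp add: M_def)
  have "acc_prob M x = 0" by (simp add: acc_prob_def acc fx e_def axis_def)
  moreover have "acc_prob M y > 0"
    using nz by (simp add: acc_prob_def acc fy e_def axis_def matrix_vector_mult_def sum_2 P_def Q_def)
  ultimately show ?thesis using isM unfolding separates_nondet_def by blast
qed

lemma diff_cases:
  "x \<noteq> y \<Longrightarrow> (\<exists>v. v \<noteq> [] \<and> y = x @ v) \<or> (\<exists>v. v \<noteq> [] \<and> x = y @ v) \<or>
     (\<exists>w a b u v. a \<noteq> b \<and> x = w @ a # u \<and> y = w @ b # v)"
proof (induction x arbitrary: y)
  case Nil then show ?case by auto
next
  case (Cons a x)
  show ?case
  proof (cases y)
    case Nil then show ?thesis by auto
  next
    case (Cons b y')
    show ?thesis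
    proof (cases "a = b")
      case False then show ?thesis using Cons by (metis append_Nil)
    next
      case True
      then have "x \<noteq> y'" using Cons.prems Cons by auto
      from Cons.IH[OF this] show ?thesis using Cons True by (metis append_Cons)
    qed
  qed
qed

lemma cancel_u: "W ** cadj W = mat 1 \<Longrightarrow> (X ** W) ** cadj W = (X::complex^2^2)"
  by (metis matrix_mul_assoc matrix_mul_rid)

lemma scaled_entry: "((k::real) *\<^sub>R (N::complex^2^2))$1$2 = of_real k * N$1$2"
  by (simp add: cscale)

lemma prefix_case:
  fixes x v :: "'s list"
  assumes "v \<noteq> []"
  shows "\<exists>M :: 's mcqfa2. is_mcqfa2 M \<and> separates_nondet M x (x @ v)"
proof -
  define s :: real where "s = 1/sqrt 3"
  obtain t v' where v: "v = t # v'" using assms by (cases v) auto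
  define T where "T = (\<lambda>\<sigma>. s *\<^sub>R hh t \<sigma>)"
  have U: "\<And>\<sigma>. unitary_mat (T \<sigma>)" unfolding T_def s_def by (rule hh_unitary)
  have uP: "wprod T x ** cadj (wprod T x) = mat 1"
    using unitary_wprod[of T x] U unfolding unitary_mat_def by blast
  have "wprod T (x @ v) ** cadj (wprod T x) = wprod T v"
    by (simp add: wprod_append uP flip: matrix_mul_assoc)
  also have "\<dots> = (s ^ length v) *\<^sub>R wprod (hh t) v" unfolding T_def by (rule wprod_scale)
  finally have eq: "wprod T (x @ v) ** cadj (wprod T x) = (s ^ length v) *\<^sub>R wprod (hh t) v" .
  have "R1 (hh t t) cA rA" using decomp_R1[OF decomp_HA] by (simp add: hh_def)
  from left_ind[OF this, of t v'] obtain c' where c': "c' \<in> {cA,cB}" "R1 (wprod (hh t) v) c' rA"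
    by (auto simp: v wprod_Cons)
  have "(wprod (hh t) v)$1$2 \<noteq> 0" using R1_entry[OF c'(2)] c'(1) units by auto
  moreover have "s ^ length v \<noteq> 0" by (simp add: s_def)
  ultimately have "(wprod T (x @ v) ** cadj (wprod T x))$1$2 \<noteq> 0"
    unfolding eq scaled_entry by simp
  from key_sep[OF U this] show ?thesis .
qed

lemma diff_case:
  fixes w u v :: "'s list"
  assumes "a \<noteq> b"
  shows "\<exists>M :: 's mcqfa2. is_mcqfa2 M \<and> separates_nondet M (w @ a # u) (w @ b # v)"
proof -
  define s :: real where "s = 1/sqrt 3"
  define T where "T = (\<lambda>\<sigma>. s *\<^sub>R hh a \<sigma>)"
  have U: "\<And>\<sigma>. unitary_mat (T \<sigma>)" unfolding T_def s_def by (rule hh_unitary)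
  have uW: "wprod T w ** cadj (wprod T w) = mat 1"
    using unitary_wprod[of T w] U unfolding unitary_mat_def by blast
  have Ta: "T a = s *\<^sub>R HA" and Tb: "T b = s *\<^sub>R HB" using assms by (auto simp: T_def hh_def)
  have hab: "hh a a = HA" "hh a b = HB" using assms by (auto simp: hh_def)
  have P: "wprod T (w @ a # u) = (wprod T u ** T a) ** wprod T w" by (simp add: wprod_append wprod_Cons)
  have Q: "wprod T (w @ b # v) = (wprod T v ** T b) ** wprod T w" by (simp add: wprod_append wprod_Cons)
  have "wprod T (w @ b # v) ** cadj (wprod T (w @ a # u))
        = (wprod T v ** T b) ** ((wprod T w ** cadj (wprod T w)) ** (cadj (T a) ** cadj (wprod T u)))"
    by (simp only: P Q cadj_mult matrix_mul_assoc)
  also have "\<dots> = wprod T v ** T b ** cadj (T a) ** cadj (wprod T u)"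
    by (simp only: uW matrix_mul_lid matrix_mul_assoc)
  also have "\<dots> = (s ^ length v * s * s * s ^ length u) *\<^sub>R
      (((wprod (hh a) v ** HB) ** cadj HA) ** cadj (wprod (hh a) u))"
    unfolding Ta Tb T_def wprod_scale cadj_scaleR by (simp only: scaleR_mm hab)
  also have "\<dots> = (s ^ length v * s * s * s ^ length u) *\<^sub>R
      (wprod (hh a) v ** ((HB ** cadj HA) ** cadj (wprod (hh a) u)))"
    by (simp only: matrix_mul_assoc)
  finally have eq: "wprod T (w @ b # v) ** cadj (wprod T (w @ a # u)) = (s ^ length v * s * s * s ^ length u) *\<^sub>R
      (wprod (hh a) v ** ((HB ** cadj HA) ** cadj (wprod (hh a) u)))" .
  have "R1 (HB ** cadj HA) cB (cnjv cA)"
    using R1_right[OF decomp_R1[OF decomp_HB] decomp_cadj[OF decomp_HA]] units by simp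
  from right_ind[OF this, of a u] obtain r' where r': "r' \<in> {cnjv cA, cnjv cB}"
     "R1 ((HB ** cadj HA) ** cadj (wprod (hh a) u)) cB r'" by auto
  from left_ind[OF r'(2), of a v] obtain c' where c': "c' \<in> {cA,cB}"
     "R1 (wprod (hh a) v ** ((HB ** cadj HA) ** cadj (wprod (hh a) u))) c' r'" by auto
  have "(wprod (hh a) v ** ((HB ** cadj HA) ** cadj (wprod (hh a) u)))$1$2 \<noteq> 0"
    using R1_entry[OF c'(2)] c'(1) r'(1) units by auto
  moreover have "s ^ length v * s * s * s ^ length u \<noteq> 0" by (simp add: s_def)
  ultimately have "(wprod T (w @ b # v) ** cadj (wprod T (w @ a # u)))$1$2 \<noteq> 0"
    unfolding eq scaled_entry by simp
  from key_sep[OF U this] show ?thesis .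
qed

lemma sep_sym: "separates_nondet M x y \<longleftrightarrow> separates_nondet M y x"
  unfolding separates_nondet_def by blast

theorem mainTheorem5:
  fixes x y :: "'s::finite list"
  assumes "x \<noteq> y"
  shows "\<exists>M :: 's mcqfa2. is_mcqfa2 M \<and> separates_nondet M x y"
  using diff_cases[OF assms]
proof (elim disjE exE conjE)
  fix v assume v: "v \<noteq> []" "y = x @ v"
  show ?thesis unfolding v(2) by (rule prefix_case[OF v(1)])
next
  fix v assume v: "v \<noteq> []" "x = y @ v"
  obtain M :: "'s mcqfa2" where "is_mcqfa2 M" "separates_nondet M y (y @ v)"
    using prefix_case[OF v(1), of y] by blast
  then show ?thesis unfolding v(2) using sep_sym[of M y "y @ v"] by blast
next
  fix w a b u v assume d: "a \<noteq> b" "x = w @ a # u" "y = w @ b # v"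
  show ?thesis unfolding d(2,3) by (rule diff_case[OF d(1)])
qed

end
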